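(* Let $f_1,\dots,f_n:\mathbb{R}^d\to\mathbb{R}$ satisfy Assumption A1 and let $F=(f_1,\dots,f_n)$. Then $R\le\sqrt{\kappa}\,r$, where $R:=\mathrm{diam}(\mathrm{Pareto}(F))=\sup\{\|x-x'\|_2:x,x'\in\mathrm{Pareto}(F)\}$.
   Context: Assumption A1: each $f_i$ is twice differentiable with $\mu\mathbf{I}\preceq\nabla^2 f_i(x)\preceq L\mathbf{I}$ for all $x$, $0<\mu\le L$; $\kappa:=L/\mu$; and $r:=\max_{i,j\in[n]}\|\operatorname{argmin} f_i-\operatorname{argmin} f_j\|_2$. A point $x$ is Pareto optimal if for all $x'$, $f_i(x')<f_i(x)$ for some $i$ implies $f_j(x')>f_j(x)$ for some $j$; $\mathrm{Pareto}(F)$ is the set of Pareto optimal points. *)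

theory Defs
  imports "HOL-Analysis.Analysis"
begin

text \<open>Twice differentiable with Hessian bounds  mu I <= Hess f(x) <= L I  (Loewner order),
  written out: f has gradient g(x), g has derivative H(x) (the Hessian as a linear map),
  and mu |h|^2 <= h . H(x) h <= L |h|^2 for all h.\<close>
definition hess_bounded :: "real \<Rightarrow> real \<Rightarrow> ('a::euclidean_space \<Rightarrow> real) \<Rightarrow> bool" where
  "hess_bounded mu L f \<longleftrightarrow>
     (\<exists>g H. (\<forall>x. (f has_derivative (\<lambda>h. g x \<bullet> h)) (at x)) \<and>
            (\<forall>x. (g has_derivative H x) (at x)) \<and>
            (\<forall>x h. mu * (norm h)\<^sup>2 \<le> h \<bullet> H x h \<and> h \<bullet> H x h \<le> L * (norm h)\<^sup>2))"

text \<open>The (unique, under strong convexity) minimizer of f.\<close>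
definition argmin_pt :: "('a \<Rightarrow> real) \<Rightarrow> 'a" where
  "argmin_pt f = (THE x. \<forall>y. f x \<le> f y)"

definition pareto :: "nat \<Rightarrow> (nat \<Rightarrow> 'a \<Rightarrow> real) \<Rightarrow> 'a set" where
  "pareto n f = {x. \<forall>x'. (\<exists>i<n. f i x' < f i x) \<longrightarrow> (\<exists>j<n. f j x' > f j x)}"

definition minimizer_spread :: "nat \<Rightarrow> (nat \<Rightarrow> 'a::euclidean_space \<Rightarrow> real) \<Rightarrow> real" where
  "minimizer_spread n f = Max {norm (argmin_pt (f i) - argmin_pt (f j)) | i j. i < n \<and> j < n}"

end

theory Submission
  imports Defs
begin

lemma taylor_lower:
  fixes p p1 p2 :: "real \<Rightarrow> real" and c :: real
  assumes d1: "\<And>t. (p has_real_derivative p1 t) (at t)"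
    and d2: "\<And>t. (p1 has_real_derivative p2 t) (at t)"
    and b: "\<And>t. c \<le> p2 t"
  shows "p 0 + p1 0 + c/2 \<le> p 1"
proof -
  have q: "p1 0 + c * t \<le> p1 t" if "0 \<le> t" for t
  proof -
    have "(\<lambda>s. p1 s - c * s) 0 \<le> (\<lambda>s. p1 s - c * s) t"
    proof (rule DERIV_nonneg_imp_nondecreasing[OF that])
      fix x show "\<exists>y. ((\<lambda>s. p1 s - c * s) has_real_derivative y) (at x) \<and> 0 \<le> y"
        using b[of x] by (intro exI[of _ "p2 x - c"]) (auto intro!: derivative_eq_intros d2)
    qed
    then show ?thesis by simp
  qed
  have "(\<lambda>s. p s - p1 0 * s - c/2 * s^2) 0 \<le> (\<lambda>s. p s - p1 0 * s - c/2 * s^2) 1"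
  proof (rule DERIV_nonneg_imp_nondecreasing[of 0 1])
    fix x :: real assume "0 \<le> x" "x \<le> 1"
    then show "\<exists>y. ((\<lambda>s. p s - p1 0 * s - c/2 * s^2) has_real_derivative y) (at x) \<and> 0 \<le> y"
      using q[of x] by (intro exI[of _ "p1 x - p1 0 - c * x"]) (auto intro!: derivative_eq_intros d1)
  qed simp
  then show ?thesis by simp
qed

lemma hb_bounds:
  fixes f :: "'a::euclidean_space \<Rightarrow> real"
  assumes "hess_bounded mu L f"
  shows "\<exists>g. (\<forall>x. (f has_derivative (\<lambda>h. g x \<bullet> h)) (at x)) \<and>
     (\<forall>x y. f x + g x \<bullet> (y - x) + mu/2 * (norm (y - x))\<^sup>2 \<le> f y) \<and>
     (\<forall>x y. f y \<le> f x + g x \<bullet> (y - x) + L/2 * (norm (y - x))\<^sup>2)"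
proof -
  obtain g H where fd: "\<And>x. (f has_derivative (\<lambda>h. g x \<bullet> h)) (at x)"
    and gd: "\<And>x. (g has_derivative H x) (at x)"
    and hb: "\<And>x h. mu * (norm h)\<^sup>2 \<le> h \<bullet> H x h \<and> h \<bullet> H x h \<le> L * (norm h)\<^sup>2"
    using assms unfolding hess_bounded_def by blast
  have main: "f x + g x \<bullet> (y - x) + mu/2 * (norm (y - x))\<^sup>2 \<le> f y \<and>
     f y \<le> f x + g x \<bullet> (y - x) + L/2 * (norm (y - x))\<^sup>2" for x y
  proof -
    define h where "h = y - x"
    define \<gamma> where "\<gamma> = (\<lambda>t::real. x + t *\<^sub>R h)"
    have gam: "(\<gamma> has_derivative (\<lambda>s. s *\<^sub>R h)) (at t)" for t
      unfolding \<gamma>_def by (auto intro!: derivative_eq_intros)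
    have D1: "((\<lambda>t. f (\<gamma> t)) has_real_derivative (g (\<gamma> t) \<bullet> h)) (at t)" for t
    proof -
      have "((\<lambda>t. f (\<gamma> t)) has_derivative (\<lambda>s. g (\<gamma> t) \<bullet> (s *\<^sub>R h))) (at t)"
        by (rule has_derivative_compose[OF gam fd])
      moreover have "(\<lambda>s. g (\<gamma> t) \<bullet> (s *\<^sub>R h)) = (*) (g (\<gamma> t) \<bullet> h)"
        by (auto simp: mult.commute)
      ultimately show ?thesis by (simp add: has_field_derivative_def)
    qed
    have D2: "((\<lambda>t. g (\<gamma> t) \<bullet> h) has_real_derivative (h \<bullet> H (\<gamma> t) h)) (at t)" for t
    proof -
      have c: "((\<lambda>t. g (\<gamma> t)) has_derivative (\<lambda>s. H (\<gamma> t) (s *\<^sub>R h))) (at t)"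
        by (rule has_derivative_compose[OF gam gd])
      have "((\<lambda>t. g (\<gamma> t) \<bullet> h) has_derivative (\<lambda>s. H (\<gamma> t) (s *\<^sub>R h) \<bullet> h)) (at t)"
        using has_derivative_inner_left[OF c] by simp
      moreover have "(\<lambda>s. H (\<gamma> t) (s *\<^sub>R h) \<bullet> h) = (*) (h \<bullet> H (\<gamma> t) h)"
        using linear_cmul[OF has_derivative_linear[OF gd]]
        by (auto simp: inner_commute mult.commute)
      ultimately show ?thesis by (simp add: has_field_derivative_def)
    qed
    have lo: "f (\<gamma> 0) + g (\<gamma> 0) \<bullet> h + mu * (norm h)\<^sup>2 / 2 \<le> f (\<gamma> 1)"
      by (rule taylor_lower[OF D1 D2]) (use hb in blast)
    have up: "- f (\<gamma> 0) + - (g (\<gamma> 0) \<bullet> h) + (- L * (norm h)\<^sup>2) / 2 \<le> - f (\<gamma> 1)"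
      by (rule taylor_lower[of "\<lambda>t. - f (\<gamma> t)" "\<lambda>t. - (g (\<gamma> t) \<bullet> h)" "\<lambda>t. - (h \<bullet> H (\<gamma> t) h)"])
         (auto intro!: derivative_eq_intros D1 D2 simp: hb)
    have "\<gamma> 0 = x" "\<gamma> 1 = y" by (auto simp: \<gamma>_def h_def)
    with lo up show ?thesis by (simp add: h_def)
  qed
  show ?thesis using fd main by blast
qed


lemma minimizer:
  fixes f :: "'a::euclidean_space \<Rightarrow> real"
  assumes fd: "\<And>x. (f has_derivative (\<lambda>h. g x \<bullet> h)) (at x)"
   and lo: "\<And>x y. f x + g x \<bullet> (y - x) + mu/2 * (norm (y - x))\<^sup>2 \<le> f y"
   and up: "\<And>x y. f y \<le> f x + g x \<bullet> (y - x) + L/2 * (norm (y - x))\<^sup>2"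
   and mu: "0 < mu" "mu \<le> L"
  shows "g (argmin_pt f) = 0 \<and> (\<forall>y. f (argmin_pt f) \<le> f y)"
proof -
  have cont: "continuous_on UNIV f"
    using fd has_derivative_continuous continuous_at_imp_continuous_on by blast
  define R where "R = 2 * norm (g 0) / mu + 1"
  have "2 * norm (g 0) / mu \<ge> 0" using mu by simp
  then have "R > 0" by (simp add: R_def)
  obtain a where a: "a \<in> cball 0 R" "\<And>y. y \<in> cball 0 R \<Longrightarrow> f a \<le> f y"
    using continuous_attains_inf[of "cball 0 R" f] cont \<open>R > 0\<close>
    by (metis compact_cball continuous_on_subset empty_iff centre_in_cball less_imp_le subset_UNIV)
  have amin: "f a \<le> f y" for y
  proof (cases "y \<in> cball 0 R")
    case True then show ?thesis using a by blast
  next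
    case False
    then have ny: "norm y > R" by simp
    have "g 0 \<bullet> y \<ge> - (norm (g 0) * norm y)"
      using Cauchy_Schwarz_ineq2[of "g 0" y] by linarith
    moreover have "norm (g 0) * norm y \<le> mu/2 * norm y * norm y"
    proof (rule mult_right_mono)
      show "norm (g 0) \<le> mu / 2 * norm y" using ny mu unfolding R_def by (simp add: field_simps)
    qed simp
    moreover have "f 0 + g 0 \<bullet> y + mu/2 * (norm y)\<^sup>2 \<le> f y" using lo[of 0 y] by simp
    ultimately have "f 0 \<le> f y" by (simp add: power2_eq_square)
    moreover have "f a \<le> f 0" using a \<open>R > 0\<close> by simp
    ultimately show ?thesis by linarith
  qed
  have ga: "g a = 0"
  proof -
    define y where "y = a - (1/L) *\<^sub>R g a"
    have "f y \<le> f a + g a \<bullet> (y - a) + L/2 * (norm (y - a))\<^sup>2" by (rule up)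
    also have "g a \<bullet> (y - a) = - (1/L) * (norm (g a))\<^sup>2"
      by (simp add: y_def power2_norm_eq_inner)
    also have "(norm (y - a))\<^sup>2 = (1/L)\<^sup>2 * (norm (g a))\<^sup>2"
      using mu by (simp add: y_def power_divide)
    finally have "f y \<le> f a - (norm (g a))\<^sup>2 / (2 * L)"
      using mu by (simp add: field_simps power2_eq_square)
    with amin[of y] have "(norm (g a))\<^sup>2 / (2 * L) \<le> 0" by linarith
    then have "(norm (g a))\<^sup>2 \<le> 0" using mu by (simp add: divide_le_0_iff)
    then show ?thesis by simp
  qed
  have "argmin_pt f = a"
    unfolding argmin_pt_def
  proof (rule the_equality)
    show "\<forall>y. f a \<le> f y" using amin by blast
  next
    fix b assume b: "\<forall>y. f b \<le> f y"
    have "f a + g a \<bullet> (b - a) + mu/2 * (norm (b - a))\<^sup>2 \<le> f b" by (rule lo)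
    with b[rule_format, of a] ga have "mu/2 * (norm (b - a))\<^sup>2 \<le> 0" by simp
    then have "(norm (b - a))\<^sup>2 \<le> 0" using mu by (simp add: mult_le_0_iff)
    then show "b = a" by simp
  qed
  then show ?thesis using ga amin by simp
qed

lemma pareto_weights:
  fixes f :: "nat \<Rightarrow> 'a::euclidean_space \<Rightarrow> real" and G :: "nat \<Rightarrow> 'a \<Rightarrow> 'a"
  assumes up: "\<And>i x y. i < n \<Longrightarrow> f i y \<le> f i x + G i x \<bullet> (y - x) + L/2 * (norm (y - x))\<^sup>2"
    and L: "0 < L" and n: "n \<ge> 1" and x: "x \<in> pareto n f"
  shows "\<exists>lam. (\<forall>i<n. 0 \<le> lam i) \<and> sum lam {..<n} = 1 \<and> (\<Sum>i<n. lam i *\<^sub>R G i x) = 0"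
proof -
  define S where "S = convex hull (\<Union>i\<in>{..<n}. {G i x})"
  have Seq: "S = {\<Sum>i\<in>{..<n}. c i *\<^sub>R s i | c s. (\<forall>i\<in>{..<n}. c i \<ge> 0) \<and> sum c {..<n} = 1 \<and> (\<forall>i\<in>{..<n}. s i \<in> {G i x})}"
    unfolding S_def by (rule convex_hull_finite_union) auto
  show ?thesis
  proof (cases "0 \<in> S")
    case True
    then obtain c s where cs: "(\<forall>i\<in>{..<n}. c i \<ge> 0)" "sum c {..<n} = 1" "(\<forall>i\<in>{..<n}. s i \<in> {G i x})"
      "0 = (\<Sum>i\<in>{..<n}. c i *\<^sub>R s i)"
      unfolding Seq by blast
    have "(\<Sum>i\<in>{..<n}. c i *\<^sub>R s i) = (\<Sum>i<n. c i *\<^sub>R G i x)"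
      using cs(3) by (intro sum.cong) auto
    then show ?thesis using cs by (intro exI[of _ c]) auto
  next
    case False
    have "convex S" unfolding S_def by (rule convex_convex_hull)
    moreover have "closed S" unfolding S_def
      by (intro compact_imp_closed finite_imp_compact_convex_hull) auto
    ultimately obtain a b where ab: "a \<noteq> 0" "0 < b" "\<forall>v\<in>S. a \<bullet> v > b"
      using separating_hyperplane_closed_0 False by blast
    have GS: "G i x \<in> S" if "i < n" for i unfolding S_def using that by (intro hull_inc) auto
    define t where "t = b / (L * (norm a)\<^sup>2)"
    define z where "z = x - t *\<^sub>R a"
    have na: "(norm a)\<^sup>2 > 0" using ab by simp
    have t: "t > 0" using ab L na by (simp add: t_def)
    have dec: "f i z < f i x" if "i < n" for i
    proof -
      have "f i z \<le> f i x + G i x \<bullet> (z - x) + L/2 * (norm (z - x))\<^sup>2" by (rule up[OF that])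
      also have "G i x \<bullet> (z - x) = - t * (a \<bullet> G i x)" by (simp add: z_def inner_commute)
      also have "(norm (z - x))\<^sup>2 = t\<^sup>2 * (norm a)\<^sup>2" using t by (simp add: z_def power_mult_distrib)
      also have "- t * (a \<bullet> G i x) < - t * b" using ab(3) GS[OF that] t by simp
      then have "f i x + - t * (a \<bullet> G i x) + L / 2 * (t\<^sup>2 * (norm a)\<^sup>2) < f i x + - t * b + L / 2 * (t\<^sup>2 * (norm a)\<^sup>2)"
        by simp
      also have "f i x + - t * b + L / 2 * (t\<^sup>2 * (norm a)\<^sup>2) = f i x - b\<^sup>2 / (2 * L * (norm a)\<^sup>2)"
        using L na unfolding t_def by (simp add: field_simps power2_eq_square)
      also have "\<dots> < f i x" using L na ab by simp
      finally show ?thesis .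
    qed
    have "\<exists>i<n. f i z < f i x" using dec[of 0] n by (intro exI[of _ 0]) auto
    then obtain j where "j < n" "f j z > f j x" using x unfolding pareto_def by blast
    with dec[OF \<open>j < n\<close>] show ?thesis by simp
  qed
qed


lemma final_alg:
  fixes mu L A X Y P Q :: real
  assumes mu: "0 < mu" "mu \<le> L" and nn: "0 \<le> A" "0 \<le> X" "0 \<le> Y" "0 \<le> P" "0 \<le> Q"
    and hx: "2 * mu * X\<^sup>2 \<le> (L - mu) * P" and hy: "2 * mu * Y\<^sup>2 \<le> (L - mu) * Q"
  shows "mu * (A + X + Y)\<^sup>2 \<le> L * (A\<^sup>2 + P + Q)"
proof (cases "L = mu")
  case True
  then have "X\<^sup>2 \<le> 0" "Y\<^sup>2 \<le> 0" using hx hy mu by (simp_all add: mult_le_0_iff)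
  then have "X = 0" "Y = 0" by simp_all
  then show ?thesis using True nn mu by simp
next
  case False
  define t where "t = L - mu"
  have t: "t > 0" using False mu by (simp add: t_def)
  have L: "L = mu + t" by (simp add: t_def)
  have e1: "t * (mu + t) * P \<ge> (mu + t) * (2 * mu * X\<^sup>2)"
    using mult_left_mono[OF hx, of "mu + t"] t mu unfolding t_def by (simp add: algebra_simps)
  have e2: "t * (mu + t) * Q \<ge> (mu + t) * (2 * mu * Y\<^sup>2)"
    using mult_left_mono[OF hy, of "mu + t"] t mu unfolding t_def by (simp add: algebra_simps)
  have sq: "0 \<le> (t * A - mu * X - mu * Y)\<^sup>2 + (mu * mu + mu * t) * (X - Y)\<^sup>2"
    using mu t by (intro add_nonneg_nonneg) auto
  have id: "t * (mu + t) * A\<^sup>2 + (mu + t) * (2 * mu * X\<^sup>2) + (mu + t) * (2 * mu * Y\<^sup>2) - t * (mu * (A + X + Y)\<^sup>2)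
      = (t * A - mu * X - mu * Y)\<^sup>2 + (mu * mu + mu * t) * (X - Y)\<^sup>2"
    by (simp add: power2_eq_square algebra_simps)
  have "t * (mu * (A + X + Y)\<^sup>2) \<le> t * (L * (A\<^sup>2 + P + Q))"
    using e1 e2 sq id unfolding L by (simp add: algebra_simps)
  then show ?thesis using t by simp
qed

lemma var_decomp:
  fixes a :: "nat \<Rightarrow> 'a::real_inner"
  assumes "sum lam I = 1"
  shows "(\<Sum>i\<in>I. lam i * (norm (x - a i))\<^sup>2) =
    (norm (x - (\<Sum>i\<in>I. lam i *\<^sub>R a i)))\<^sup>2 + (\<Sum>i\<in>I. lam i * (norm ((\<Sum>i\<in>I. lam i *\<^sub>R a i) - a i))\<^sup>2)"
proof -
  define c where "c = (\<Sum>i\<in>I. lam i *\<^sub>R a i)"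
  have e: "(norm (x - a i))\<^sup>2 = (norm (x - c))\<^sup>2 + 2 * ((x - c) \<bullet> (c - a i)) + (norm (c - a i))\<^sup>2" for i
  proof -
    have "x - a i = (x - c) + (c - a i)" by simp
    then have "(norm (x - a i))\<^sup>2 = (norm ((x - c) + (c - a i)))\<^sup>2" by metis
    also have "\<dots> = (norm (x - c))\<^sup>2 + 2 * ((x - c) \<bullet> (c - a i)) + (norm (c - a i))\<^sup>2"
      using dot_norm[of "x - c" "c - a i"] by simp
    finally show ?thesis .
  qed
  have z: "(\<Sum>i\<in>I. lam i * ((x - c) \<bullet> (c - a i))) = 0"
  proof -
    have "(\<Sum>i\<in>I. lam i * ((x - c) \<bullet> (c - a i))) = (x - c) \<bullet> (\<Sum>i\<in>I. lam i *\<^sub>R (c - a i))"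
      by (simp add: inner_sum_right)
    also have "(\<Sum>i\<in>I. lam i *\<^sub>R (c - a i)) = (\<Sum>i\<in>I. lam i) *\<^sub>R c - c"
      by (simp add: scaleR_diff_right sum.distrib sum_subtractf scaleR_sum_left c_def)
    finally show ?thesis using assms by simp
  qed
  have "(\<Sum>i\<in>I. lam i * (norm (x - a i))\<^sup>2) =
     (\<Sum>i\<in>I. lam i) * (norm (x - c))\<^sup>2 + 2 * (\<Sum>i\<in>I. lam i * ((x - c) \<bullet> (c - a i))) + (\<Sum>i\<in>I. lam i * (norm (c - a i))\<^sup>2)"
  proof -
    have r: "l * (A + 2 * B + C) = l * A + 2 * (l * B) + l * C" for l A B C :: real
      by (simp add: algebra_simps)
    have "(\<Sum>i\<in>I. lam i * (norm (x - a i))\<^sup>2) = (\<Sum>i\<in>I. lam i * (norm (x - c))\<^sup>2 + 2 * (lam i * ((x - c) \<bullet> (c - a i))) + lam i * (norm (c - a i))\<^sup>2)"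
      by (rule sum.cong[OF refl]) (simp only: e r)
    also have "\<dots> = (\<Sum>i\<in>I. lam i * (norm (x - c))\<^sup>2) + (\<Sum>i\<in>I. 2 * (lam i * ((x - c) \<bullet> (c - a i)))) + (\<Sum>i\<in>I. lam i * (norm (c - a i))\<^sup>2)"
      by (simp only: sum.distrib)
    finally show ?thesis by (simp only: sum_distrib_left[symmetric] sum_distrib_right[symmetric])
  qed
  then show ?thesis using z assms by (simp add: c_def)
qed


lemma weighted_key:
  fixes f :: "nat \<Rightarrow> 'a::euclidean_space \<Rightarrow> real"
  assumes lo: "\<And>i x y. i < n \<Longrightarrow> f i x + G i x \<bullet> (y - x) + mu/2 * (norm (y - x))\<^sup>2 \<le> f i y"
   and up: "\<And>i x y. i < n \<Longrightarrow> f i y \<le> f i x + G i x \<bullet> (y - x) + L/2 * (norm (y - x))\<^sup>2"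
   and ga: "\<And>i. i < n \<Longrightarrow> G i (a i) = 0"
   and lam: "\<forall>i<n. 0 \<le> lam i" "sum lam {..<n} = 1" "(\<Sum>i<n. lam i *\<^sub>R G i x) = 0"
  shows "mu * (norm (p - x))\<^sup>2 + mu * (\<Sum>i<n. lam i * (norm (x - a i))\<^sup>2)
      \<le> L * (\<Sum>i<n. lam i * (norm (p - a i))\<^sup>2)"
proof -
  have per: "lam i * (G i x \<bullet> (p - x)) + lam i * (mu/2 * (norm (p - x))\<^sup>2) + mu/2 * (lam i * (norm (x - a i))\<^sup>2)
      \<le> L/2 * (lam i * (norm (p - a i))\<^sup>2)" if "i < n" for i
  proof -
    have 1: "f i x + G i x \<bullet> (p - x) + mu/2 * (norm (p - x))\<^sup>2 \<le> f i p" by (rule lo[OF that])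
    have 2: "f i (a i) + mu/2 * (norm (x - a i))\<^sup>2 \<le> f i x" using lo[OF that, where x="a i" and y=x] ga[OF that] by simp
    have 3: "f i p \<le> f i (a i) + L/2 * (norm (p - a i))\<^sup>2" using up[OF that, where x="a i" and y=p] ga[OF that] by simp
    have "G i x \<bullet> (p - x) + mu/2 * (norm (p - x))\<^sup>2 + mu/2 * (norm (x - a i))\<^sup>2 \<le> L/2 * (norm (p - a i))\<^sup>2"
      using 1 2 3 by linarith
    from mult_left_mono[OF this, of "lam i"] lam(1) that show ?thesis by (simp add: algebra_simps)
  qed
  have s: "(\<Sum>i<n. lam i * (G i x \<bullet> (p - x)) + lam i * (mu/2 * (norm (p - x))\<^sup>2) + mu/2 * (lam i * (norm (x - a i))\<^sup>2))
      \<le> (\<Sum>i<n. L/2 * (lam i * (norm (p - a i))\<^sup>2))"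
    by (rule sum_mono) (use per in auto)
  have z: "(\<Sum>i<n. lam i * (G i x \<bullet> (p - x))) = 0"
  proof -
    have "(\<Sum>i<n. lam i * (G i x \<bullet> (p - x))) = (\<Sum>i<n. lam i *\<^sub>R G i x) \<bullet> (p - x)"
      by (simp add: inner_sum_left)
    then show ?thesis using lam(3) by simp
  qed
  have "(\<Sum>i<n. lam i * (G i x \<bullet> (p - x)) + lam i * (mu/2 * (norm (p - x))\<^sup>2) + mu/2 * (lam i * (norm (x - a i))\<^sup>2))
     = (\<Sum>i<n. lam i * (G i x \<bullet> (p - x))) + (\<Sum>i<n. lam i) * (mu/2 * (norm (p - x))\<^sup>2) + mu/2 * (\<Sum>i<n. lam i * (norm (x - a i))\<^sup>2)"
    by (simp only: sum.distrib sum_distrib_left[symmetric] sum_distrib_right[symmetric])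
  moreover have "(\<Sum>i<n. L/2 * (lam i * (norm (p - a i))\<^sup>2)) = L/2 * (\<Sum>i<n. lam i * (norm (p - a i))\<^sup>2)"
    by (simp only: sum_distrib_left[symmetric])
  ultimately show ?thesis using s z lam(2) by simp
qed


theorem lemma1:
  fixes f :: "nat \<Rightarrow> 'a::euclidean_space \<Rightarrow> real" and n :: nat and mu L :: real
  assumes "n \<ge> 1" and "0 < mu" and "mu \<le> L"
    and "\<And>i. i < n \<Longrightarrow> hess_bounded mu L (f i)"
  shows "\<forall>x\<in>pareto n f. \<forall>x'\<in>pareto n f.
           norm (x - x') \<le> sqrt (L / mu) * minimizer_spread n f"
proof -
  note n = assms(1) and mu = assms(2,3)
  have "\<forall>i. \<exists>g. i < n \<longrightarrow> ((\<forall>x. (f i has_derivative (\<lambda>h. g x \<bullet> h)) (at x)) \<and>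
     (\<forall>x y. f i x + g x \<bullet> (y - x) + mu/2 * (norm (y - x))\<^sup>2 \<le> f i y) \<and>
     (\<forall>x y. f i y \<le> f i x + g x \<bullet> (y - x) + L/2 * (norm (y - x))\<^sup>2))"
    using hb_bounds assms(4) by blast
  then have "\<exists>G. \<forall>i. i < n \<longrightarrow> ((\<forall>x. (f i has_derivative (\<lambda>h. G i x \<bullet> h)) (at x)) \<and>
     (\<forall>x y. f i x + G i x \<bullet> (y - x) + mu/2 * (norm (y - x))\<^sup>2 \<le> f i y) \<and>
     (\<forall>x y. f i y \<le> f i x + G i x \<bullet> (y - x) + L/2 * (norm (y - x))\<^sup>2))"
    by (rule choice)
  then obtain G where G: "\<forall>i. i < n \<longrightarrow> ((\<forall>x. (f i has_derivative (\<lambda>h. G i x \<bullet> h)) (at x)) \<and>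
     (\<forall>x y. f i x + G i x \<bullet> (y - x) + mu/2 * (norm (y - x))\<^sup>2 \<le> f i y) \<and>
     (\<forall>x y. f i y \<le> f i x + G i x \<bullet> (y - x) + L/2 * (norm (y - x))\<^sup>2))"
    by blast
  have fd: "\<And>i x. i < n \<Longrightarrow> (f i has_derivative (\<lambda>h. G i x \<bullet> h)) (at x)" using G by blast
  have lo: "\<And>i x y. i < n \<Longrightarrow> f i x + G i x \<bullet> (y - x) + mu/2 * (norm (y - x))\<^sup>2 \<le> f i y" using G by blast
  have up: "\<And>i x y. i < n \<Longrightarrow> f i y \<le> f i x + G i x \<bullet> (y - x) + L/2 * (norm (y - x))\<^sup>2" using G by blast
  define a where "a i = argmin_pt (f i)" for i
  have ga: "G i (a i) = 0" if "i < n" for i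
    using minimizer[OF fd[OF that] lo[OF that] up[OF that] mu] unfolding a_def by blast
  define r where "r = minimizer_spread n f"
  have setq: "{norm (argmin_pt (f i) - argmin_pt (f j)) | i j. i < n \<and> j < n}
      = (\<lambda>(i, j). norm (a i - a j)) ` ({..<n} \<times> {..<n})"
    unfolding a_def by auto
  have rb: "norm (a i - a j) \<le> r" if "i < n" "j < n" for i j
    unfolding r_def minimizer_spread_def setq
    by (rule Max_ge) (use that in auto)
  have r0: "0 \<le> r" using rb[of 0 0] n by simp
  have rb2: "(norm (a i - a j))\<^sup>2 \<le> r\<^sup>2" if "i < n" "j < n" for i j
    using rb[OF that] by (simp add: power_mono)
  define c where "c lam = (\<Sum>i<n. lam i *\<^sub>R a i)" for lam
  define V where "V lam = (\<Sum>i<n. lam i * (norm (c lam - a i))\<^sup>2)" for lam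
  have cen: "\<exists>lam. (\<forall>i<n. 0 \<le> lam i) \<and> sum lam {..<n} = 1 \<and> 2 * mu * (norm (x - c lam))\<^sup>2 \<le> (L - mu) * V lam"
    if x: "x \<in> pareto n f" for x
  proof -
    obtain lam where lam: "\<forall>i<n. 0 \<le> lam i" "sum lam {..<n} = 1" "(\<Sum>i<n. lam i *\<^sub>R G i x) = 0"
      using pareto_weights[OF up _ n x] mu by fastforce
    have k: "mu * (norm (c lam - x))\<^sup>2 + mu * (\<Sum>i<n. lam i * (norm (x - a i))\<^sup>2)
      \<le> L * (\<Sum>i<n. lam i * (norm (c lam - a i))\<^sup>2)"
      by (rule weighted_key[OF lo up ga lam])
    have "(\<Sum>i<n. lam i * (norm (x - a i))\<^sup>2) = (norm (x - c lam))\<^sup>2 + V lam"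
      unfolding V_def c_def by (rule var_decomp[OF lam(2)])
    with k have "mu * (norm (x - c lam))\<^sup>2 + mu * ((norm (x - c lam))\<^sup>2 + V lam) \<le> L * V lam"
      by (simp add: V_def norm_minus_commute)
    then show ?thesis using lam by (intro exI[of _ lam]) (auto simp: algebra_simps)
  qed
  have Vnn: "0 \<le> V lam" if "\<forall>i<n. 0 \<le> lam i" for lam
    unfolding V_def using that by (intro sum_nonneg) auto
  show ?thesis
  proof (intro ballI)
    fix x y assume x: "x \<in> pareto n f" and y: "y \<in> pareto n f"
    obtain lam where lam: "\<forall>i<n. 0 \<le> lam i" "sum lam {..<n} = 1" "2 * mu * (norm (x - c lam))\<^sup>2 \<le> (L - mu) * V lam"
      using cen[OF x] by blast
    obtain nu where nu: "\<forall>i<n. 0 \<le> nu i" "sum nu {..<n} = 1" "2 * mu * (norm (y - c nu))\<^sup>2 \<le> (L - mu) * V nu"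
      using cen[OF y] by blast
    define A where "A = norm (c lam - c nu)"
    define X where "X = norm (x - c lam)"
    define Y where "Y = norm (y - c nu)"
    have inner_eq: "(\<Sum>i<n. lam i * (norm (a j - a i))\<^sup>2) = (norm (a j - c lam))\<^sup>2 + V lam" for j
      unfolding V_def c_def by (rule var_decomp[OF lam(2)])
    have inner_le: "(\<Sum>i<n. lam i * (norm (a j - a i))\<^sup>2) \<le> r\<^sup>2" if "j < n" for j
    proof -
      have "(\<Sum>i<n. lam i * (norm (a j - a i))\<^sup>2) \<le> (\<Sum>i<n. lam i * r\<^sup>2)"
        using lam(1) rb2[OF that] by (intro sum_mono mult_left_mono) auto
      also have "\<dots> = r\<^sup>2" using lam(2) by (simp add: sum_distrib_right[symmetric])
      finally show ?thesis .
    qed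
    have outer_le: "(\<Sum>j<n. nu j * ((norm (a j - c lam))\<^sup>2 + V lam)) \<le> r\<^sup>2"
    proof -
      have "(\<Sum>j<n. nu j * ((norm (a j - c lam))\<^sup>2 + V lam)) \<le> (\<Sum>j<n. nu j * r\<^sup>2)"
        using nu(1) inner_le inner_eq by (intro sum_mono mult_left_mono) auto
      also have "\<dots> = r\<^sup>2" using nu(2) by (simp add: sum_distrib_right[symmetric])
      finally show ?thesis .
    qed
    have "(\<Sum>j<n. nu j * ((norm (a j - c lam))\<^sup>2 + V lam)) = (\<Sum>j<n. nu j * (norm (c lam - a j))\<^sup>2) + V lam"
      using nu(2) by (simp add: distrib_left sum.distrib sum_distrib_right[symmetric] norm_minus_commute)
    also have "(\<Sum>j<n. nu j * (norm (c lam - a j))\<^sup>2) = A\<^sup>2 + V nu"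
      unfolding A_def V_def c_def by (rule var_decomp[OF nu(2)])
    finally have AV: "A\<^sup>2 + V nu + V lam \<le> r\<^sup>2" using outer_le by simp
    have "mu * (A + X + Y)\<^sup>2 \<le> L * (A\<^sup>2 + V lam + V nu)"
      by (rule final_alg[OF mu]) (use lam nu Vnn in \<open>auto simp: A_def X_def Y_def\<close>)
    also have "\<dots> \<le> L * r\<^sup>2" using AV mu by (intro mult_left_mono) auto
    finally have s1: "(A + X + Y)\<^sup>2 \<le> L / mu * r\<^sup>2" using mu by (simp add: field_simps)
    have "x - y = (x - c lam) + (c lam - c nu) - (y - c nu)" by simp
    then have "norm (x - y) \<le> norm ((x - c lam) + (c lam - c nu)) + norm (y - c nu)"
      by (metis norm_triangle_ineq4)
    also have "norm ((x - c lam) + (c lam - c nu)) \<le> X + A" unfolding A_def X_def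
      by (rule norm_triangle_ineq)
    finally have "norm (x - y) \<le> X + A + Y" unfolding Y_def by simp
    moreover have "A + X + Y \<le> sqrt (L / mu * r\<^sup>2)" using s1 by (rule real_le_rsqrt)
    moreover have "sqrt (L / mu * r\<^sup>2) = sqrt (L / mu) * r" 
    proof -
      have "sqrt (r\<^sup>2) = r" using r0 by simp
      then show ?thesis by (simp only: real_sqrt_mult)
    qed
    ultimately show "norm (x - y) \<le> sqrt (L / mu) * minimizer_spread n f" unfolding r_def by simp
  qed
qed

end
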